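(* Let $T$ be a tree that is not isomorphic to the path $P_2$. Then the following statements are equivalent: (i) $\gamma_M(T)=\ell(T)$; (ii) $\gamma(T)=|\mathcal S(T)|$; (iii) for every vertex $u\in V(T)$ there is a leaf of $T$ at distance at most $2$ from $u$.
   Context: All graphs are finite, simple, undirected and connected; $d(u,v)$ is the shortest-path distance. A set $S\subseteq V(G)$ is a resolving set if for all distinct $x,y\in V(G)$ there is $u\in S$ with $d(u,x)\neq d(u,y)$. A set $S$ is dominating if every vertex not in $S$ has a neighbor in $S$; $\gamma(G)$ is the minimum size of a dominating set. A metric-locating-dominating set (MLD-set) is a set that is both resolving and dominating; $\gamma_M(G)$ is the minimum size of an MLD-set. In a tree $T$, a leaf is a vertex of degree 1, $\ell(T)$ is the number of leaves, a support vertex is a vertex adjacent to some leaf, and $\mathcal S(T)$ is the set of support vertices. *)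

theory Defs
  imports Main
begin

definition simple_graph :: "'a set \<Rightarrow> ('a \<Rightarrow> 'a \<Rightarrow> bool) \<Rightarrow> bool" where
  "simple_graph V E \<longleftrightarrow> finite V \<and> V \<noteq> {} \<and>
     (\<forall>u v. E u v \<longrightarrow> u \<in> V \<and> v \<in> V \<and> u \<noteq> v \<and> E v u)"

definition walk :: "'a set \<Rightarrow> ('a \<Rightarrow> 'a \<Rightarrow> bool) \<Rightarrow> 'a list \<Rightarrow> bool" where
  "walk V E xs \<longleftrightarrow> xs \<noteq> [] \<and> set xs \<subseteq> V \<and>
     (\<forall>i. Suc i < length xs \<longrightarrow> E (xs ! i) (xs ! Suc i))"

definition connected_graph :: "'a set \<Rightarrow> ('a \<Rightarrow> 'a \<Rightarrow> bool) \<Rightarrow> bool" where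
  "connected_graph V E \<longleftrightarrow>
     (\<forall>u\<in>V. \<forall>v\<in>V. \<exists>xs. walk V E xs \<and> hd xs = u \<and> last xs = v)"

definition is_cycle :: "'a set \<Rightarrow> ('a \<Rightarrow> 'a \<Rightarrow> bool) \<Rightarrow> 'a list \<Rightarrow> bool" where
  "is_cycle V E xs \<longleftrightarrow> walk V E xs \<and> distinct xs \<and> length xs \<ge> 3 \<and> E (last xs) (hd xs)"

definition is_tree :: "'a set \<Rightarrow> ('a \<Rightarrow> 'a \<Rightarrow> bool) \<Rightarrow> bool" where
  "is_tree V E \<longleftrightarrow> simple_graph V E \<and> connected_graph V E \<and> (\<nexists>xs. is_cycle V E xs)"

definition gdist :: "'a set \<Rightarrow> ('a \<Rightarrow> 'a \<Rightarrow> bool) \<Rightarrow> 'a \<Rightarrow> 'a \<Rightarrow> nat" where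
  "gdist V E u v = (LEAST n. \<exists>xs. walk V E xs \<and> hd xs = u \<and> last xs = v \<and> length xs = Suc n)"

definition resolving_set :: "'a set \<Rightarrow> ('a \<Rightarrow> 'a \<Rightarrow> bool) \<Rightarrow> 'a set \<Rightarrow> bool" where
  "resolving_set V E S \<longleftrightarrow> S \<subseteq> V \<and>
     (\<forall>x\<in>V. \<forall>y\<in>V. x \<noteq> y \<longrightarrow> (\<exists>u\<in>S. gdist V E u x \<noteq> gdist V E u y))"

definition dominating_set :: "'a set \<Rightarrow> ('a \<Rightarrow> 'a \<Rightarrow> bool) \<Rightarrow> 'a set \<Rightarrow> bool" where
  "dominating_set V E S \<longleftrightarrow> S \<subseteq> V \<and> (\<forall>v\<in>V - S. \<exists>u\<in>S. E v u)"

definition mld_set :: "'a set \<Rightarrow> ('a \<Rightarrow> 'a \<Rightarrow> bool) \<Rightarrow> 'a set \<Rightarrow> bool" where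
  "mld_set V E S \<longleftrightarrow> resolving_set V E S \<and> dominating_set V E S"

definition domination_number :: "'a set \<Rightarrow> ('a \<Rightarrow> 'a \<Rightarrow> bool) \<Rightarrow> nat" where
  "domination_number V E = Min (card ` {S. dominating_set V E S})"

definition mld_number :: "'a set \<Rightarrow> ('a \<Rightarrow> 'a \<Rightarrow> bool) \<Rightarrow> nat" where
  "mld_number V E = Min (card ` {S. mld_set V E S})"

definition degree :: "'a set \<Rightarrow> ('a \<Rightarrow> 'a \<Rightarrow> bool) \<Rightarrow> 'a \<Rightarrow> nat" where
  "degree V E v = card {u\<in>V. E v u}"

definition leaves :: "'a set \<Rightarrow> ('a \<Rightarrow> 'a \<Rightarrow> bool) \<Rightarrow> 'a set" where
  "leaves V E = {v\<in>V. degree V E v = 1}"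

definition support_vertices :: "'a set \<Rightarrow> ('a \<Rightarrow> 'a \<Rightarrow> bool) \<Rightarrow> 'a set" where
  "support_vertices V E = {v\<in>V. \<exists>l\<in>leaves V E. E v l}"

definition iso_P2 :: "'a set \<Rightarrow> ('a \<Rightarrow> 'a \<Rightarrow> bool) \<Rightarrow> bool" where
  "iso_P2 V E \<longleftrightarrow> (\<exists>a b. a \<noteq> b \<and> V = {a, b} \<and> E a b)"

end

theory Submission
  imports Defs
begin

locale tr =
  fixes V :: "'a set" and E :: "'a \<Rightarrow> 'a \<Rightarrow> bool"
  assumes tree: "is_tree V E"
begin

abbreviation d where "d \<equiv> gdist V E"

lemma finV: "finite V" using tree unfolding is_tree_def simple_graph_def by blast
lemma EV: "E u v \<Longrightarrow> u \<in> V \<and> v \<in> V" using tree unfolding is_tree_def simple_graph_def by blast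
lemma Esym: "E u v \<Longrightarrow> E v u" using tree unfolding is_tree_def simple_graph_def by blast
lemma Eirr: "E u v \<Longrightarrow> u \<noteq> v" using tree unfolding is_tree_def simple_graph_def by blast
lemma conn: "u \<in> V \<Longrightarrow> v \<in> V \<Longrightarrow> \<exists>xs. walk V E xs \<and> hd xs = u \<and> last xs = v"
  using tree unfolding is_tree_def connected_graph_def by blast
lemma nocyc: "\<not> is_cycle V E xs" using tree unfolding is_tree_def by blast

lemma walk_snoc: "walk V E xs \<Longrightarrow> E (last xs) w \<Longrightarrow> walk V E (xs @ [w])"
  unfolding walk_def
proof (intro conjI allI impI)
  fix i assume w: "xs \<noteq> [] \<and> set xs \<subseteq> V \<and> (\<forall>i. Suc i < length xs \<longrightarrow> E (xs ! i) (xs ! Suc i))"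
    and e: "E (last xs) w" and i: "Suc i < length (xs @ [w])"
  show "E ((xs @ [w]) ! i) ((xs @ [w]) ! Suc i)"
  proof (cases "Suc i < length xs")
    case True then show ?thesis using w by (simp add: nth_append)
  next
    case False
    then have "Suc i = length xs" using i by simp
    then have "length xs - Suc 0 = i" "i < length xs" by simp_all
    then show ?thesis using w e by (simp add: nth_append last_conv_nth)
  qed
qed (auto dest: EV)

lemma walk_Cons: "xs \<noteq> [] \<Longrightarrow> walk V E (v # xs) \<longleftrightarrow> v \<in> V \<and> E v (hd xs) \<and> walk V E xs"
  unfolding walk_def
  by (auto simp: hd_conv_nth nth_Cons split: nat.splits)

lemma walk_rev: "walk V E xs \<Longrightarrow> walk V E (rev xs)"
  unfolding walk_def
proof (intro conjI allI impI)
  fix i assume w: "xs \<noteq> [] \<and> set xs \<subseteq> V \<and> (\<forall>i. Suc i < length xs \<longrightarrow> E (xs ! i) (xs ! Suc i))"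
    and i: "Suc i < length (rev xs)"
  define j where "j = length xs - Suc (Suc i)"
  have j: "Suc j < length xs" "length xs - Suc i = Suc j" using i j_def by auto
  have "E (xs ! j) (xs ! Suc j)" using w j by blast
  moreover have "length xs - Suc (Suc i) = j" using j_def by simp
  ultimately show "E (rev xs ! i) (rev xs ! Suc i)" using i j by (simp add: rev_nth Esym)
qed auto

lemma walk_butlast: "walk V E xs \<Longrightarrow> length xs \<ge> 2 \<Longrightarrow> walk V E (butlast xs)"
  unfolding walk_def
proof (intro conjI allI impI)
  fix i assume w: "xs \<noteq> [] \<and> set xs \<subseteq> V \<and> (\<forall>i. Suc i < length xs \<longrightarrow> E (xs ! i) (xs ! Suc i))"
    and i: "Suc i < length (butlast xs)"
  then show "E (butlast xs ! i) (butlast xs ! Suc i)" by (simp add: nth_butlast)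
next
  assume "xs \<noteq> [] \<and> set xs \<subseteq> V \<and> (\<forall>i. Suc i < length xs \<longrightarrow> E (xs ! i) (xs ! Suc i))"
    "2 \<le> length xs"
  then show "butlast xs \<noteq> []" "set (butlast xs) \<subseteq> V"
    by (auto dest: in_set_butlastD) (cases xs; auto split: if_splits)
qed

lemma d_le: "walk V E xs \<Longrightarrow> hd xs = u \<Longrightarrow> last xs = v \<Longrightarrow> d u v \<le> length xs - 1"
  unfolding gdist_def
  apply (rule Least_le)
  by (metis Suc_diff_1 length_greater_0_conv walk_def)

lemma d_ex: "u \<in> V \<Longrightarrow> v \<in> V \<Longrightarrow> \<exists>xs. walk V E xs \<and> hd xs = u \<and> last xs = v \<and> length xs = Suc (d u v)"
proof -
  assume "u \<in> V" "v \<in> V"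
  then obtain xs where "walk V E xs" "hd xs = u" "last xs = v" using conn by blast
  then have "\<exists>n xs. walk V E xs \<and> hd xs = u \<and> last xs = v \<and> length xs = Suc n"
    by (metis Suc_diff_1 length_greater_0_conv walk_def)
  then show ?thesis unfolding gdist_def by (rule LeastI_ex)
qed

lemma marker0: True by simp

lemma d_refl: "u \<in> V \<Longrightarrow> d u u = 0"
  using d_le[of "[u]" u u] by (simp add: walk_def)

lemma d_zero: "u \<in> V \<Longrightarrow> v \<in> V \<Longrightarrow> d u v = 0 \<Longrightarrow> u = v"
  using d_ex[of u v] by (auto simp: length_Suc_conv)

lemma d_sym: "u \<in> V \<Longrightarrow> v \<in> V \<Longrightarrow> d u v = d v u"
proof -
  have *: "d u v \<le> d v u" if uv: "u \<in> V" "v \<in> V" for u v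
  proof -
    obtain xs where "walk V E xs" "hd xs = v" "last xs = u" "length xs = Suc (d v u)"
      using d_ex[OF uv(2) uv(1)] by blast
    then show ?thesis using d_le[of "rev xs" u v] walk_rev
      by (simp add: hd_rev last_rev)
  qed
  show "u \<in> V \<Longrightarrow> v \<in> V \<Longrightarrow> d u v = d v u" using * by (simp add: le_antisym)
qed

lemma d_edge: "E u v \<Longrightarrow> d u v = 1"
proof -
  assume e: "E u v"
  have "walk V E [u, v]" using e EV unfolding walk_def by auto
  then have "d u v \<le> 1" using d_le[of "[u,v]" u v] by simp
  moreover have "d u v \<noteq> 0" using d_zero e EV Eirr by blast
  ultimately show ?thesis by simp
qed

lemma d_tri: "u \<in> V \<Longrightarrow> E v w \<Longrightarrow> d u w \<le> d u v + 1"
proof -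
  assume u: "u \<in> V" and e: "E v w"
  obtain xs where "walk V E xs" "hd xs = u" "last xs = v" "length xs = Suc (d u v)"
    using d_ex u e EV by blast
  then show ?thesis using d_le[of "xs @ [w]" u w] walk_snoc[of xs w] e
    by (auto simp: hd_append walk_def)
qed

lemma d_one: "u \<in> V \<Longrightarrow> v \<in> V \<Longrightarrow> d u v = 1 \<Longrightarrow> E u v"
proof -
  assume "u \<in> V" "v \<in> V" "d u v = 1"
  then obtain xs where w: "walk V E xs" "hd xs = u" "last xs = v" "length xs = 2"
    using d_ex by fastforce
  then have "E (xs!0) (xs!1)" unfolding walk_def by auto
  moreover have "xs \<noteq> []" using w by auto
  moreover have "xs ! 0 = u" "xs ! 1 = v" using w calculation(2) by (auto simp: hd_conv_nth last_conv_nth)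
  ultimately show ?thesis by simp
qed

lemma d_pred: "u \<in> V \<Longrightarrow> v \<in> V \<Longrightarrow> d u v = Suc k \<Longrightarrow> \<exists>w. E w v \<and> d u w = k"
proof -
  assume u: "u \<in> V" and v: "v \<in> V" and dk: "d u v = Suc k"
  obtain xs where w: "walk V E xs" "hd xs = u" "last xs = v" "length xs = Suc (Suc k)"
    using d_ex u v dk by fastforce
  define ys where "ys = butlast xs"
  have wy: "walk V E ys" using walk_butlast w ys_def by simp
  have ly: "length ys = Suc k" using w ys_def by simp
  have hy: "hd ys = u" using w ys_def by (cases xs) auto
  have lasty: "last ys = xs ! k"
  proof -
    have "ys \<noteq> []" using ly by auto
    then have "last ys = ys ! k" using ly by (simp add: last_conv_nth)
    then show ?thesis using ly ys_def by (simp add: nth_butlast)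
  qed
  have "xs \<noteq> []" using w by auto
  then have lx: "last xs = xs ! Suc k" using w by (simp add: last_conv_nth)
  have e: "E (xs ! k) v" using w(1,3,4) lx unfolding walk_def by auto
  have "d u (xs ! k) \<le> k" using d_le[OF wy hy lasty] ly by simp
  moreover have "Suc k \<le> d u (xs!k) + 1" using d_tri[OF u e] dk by simp
  ultimately show ?thesis using e by (intro exI[of _ "xs!k"]) simp
qed


definition par where "par m v = (SOME p. E p v \<and> d m p + 1 = d m v)"

lemma par: "m \<in> V \<Longrightarrow> v \<in> V \<Longrightarrow> v \<noteq> m \<Longrightarrow> E (par m v) v \<and> d m (par m v) + 1 = d m v"
proof -
  assume m: "m \<in> V" and v: "v \<in> V" and ne: "v \<noteq> m"
  have "d m v \<noteq> 0" using d_zero[OF m v] ne by auto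
  then obtain k where "d m v = Suc k" by (cases "d m v") auto
  then obtain w where "E w v" "d m w = k" using d_pred[OF m v] by blast
  then have "\<exists>p. E p v \<and> d m p + 1 = d m v" using \<open>d m v = Suc k\<close> by auto
  then show ?thesis unfolding par_def by (rule someI_ex)
qed

lemma chain: "m \<in> V \<Longrightarrow> a \<in> V \<Longrightarrow> t \<le> d m a \<Longrightarrow>
   (par m ^^ t) a \<in> V \<and> d m ((par m ^^ t) a) = d m a - t"
proof (induction t)
  case 0 then show ?case by simp
next
  case (Suc t)
  let ?w = "(par m ^^ t) a"
  have w: "?w \<in> V" "d m ?w = d m a - t" using Suc by auto
  have "?w \<noteq> m" using w Suc.prems d_refl[of m] by auto
  then have "E (par m ?w) ?w \<and> d m (par m ?w) + 1 = d m ?w" using par[OF Suc.prems(1) w(1)] by blast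
  then show ?case using w EV by auto
qed

lemma chain_edge: "m \<in> V \<Longrightarrow> a \<in> V \<Longrightarrow> t < d m a \<Longrightarrow>
   E ((par m ^^ Suc t) a) ((par m ^^ t) a)"
proof -
  assume m: "m \<in> V" and a: "a \<in> V" and t: "t < d m a"
  let ?w = "(par m ^^ t) a"
  have w: "?w \<in> V" "d m ?w = d m a - t" using chain[OF m a] t by auto
  have "?w \<noteq> m" using w t d_refl[of m] m by auto
  then show ?thesis using par[OF m w(1)] by simp
qed

lemma chain_end: "m \<in> V \<Longrightarrow> a \<in> V \<Longrightarrow> (par m ^^ d m a) a = m"
  using chain[of m a "d m a"] d_zero[of m] by (metis diff_self_eq_0 le_refl)

lemma cyc_path:
  assumes m: "m \<in> V" and a: "a \<in> V" and b: "b \<in> V" and ab: "a \<noteq> b"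
    and da: "d m a = L" and db: "d m b = L"
  shows "\<exists>P. walk V E P \<and> distinct P \<and> hd P = a \<and> last P = b \<and> length P \<ge> 3 \<and> (\<forall>w\<in>set P. d m w \<le> L)"
proof -
  define pa where "pa t = (par m ^^ t) a" for t
  define pb where "pb t = (par m ^^ t) b" for t
  have pa: "t \<le> L \<Longrightarrow> pa t \<in> V \<and> d m (pa t) = L - t" for t using chain[OF m a] da pa_def by auto
  have pb: "t \<le> L \<Longrightarrow> pb t \<in> V \<and> d m (pb t) = L - t" for t using chain[OF m b] db pb_def by auto
  have ea: "t < L \<Longrightarrow> E (pa t) (pa (Suc t))" for t using chain_edge[OF m a] da pa_def Esym by auto
  have eb: "t < L \<Longrightarrow> E (pb (Suc t)) (pb t)" for t using chain_edge[OF m b] db pb_def by auto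
  have exL: "pa L = pb L" using chain_end[OF m a] chain_end[OF m b] da db pa_def pb_def by simp
  define J where "J = (LEAST t. pa t = pb t)"
  have JL: "J \<le> L" unfolding J_def using exL by (rule Least_le)
  have pJ: "pa J = pb J" unfolding J_def using exL by (rule LeastI)
  have lt: "i < J \<Longrightarrow> pa i \<noteq> pb i" for i unfolding J_def by (rule not_less_Least)
  have J0: "J \<noteq> 0"
  proof
    assume "J = 0"
    with pJ have "pa 0 = pb 0" by simp
    then show False using ab by (simp add: pa_def pb_def)
  qed
  define f where "f i = (if i \<le> J then pa i else pb (2*J - i))" for i
  define P where "P = map f [0..<2*J+1]"
  have lev: "i \<le> 2*J \<Longrightarrow> f i \<in> V \<and> d m (f i) = (if i \<le> J then L - i else L - (2*J - i))" for i
    using pa pb JL unfolding f_def by auto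
  have edges: "Suc i < 2*J+1 \<Longrightarrow> E (f i) (f (Suc i))" for i
  proof -
    assume i: "Suc i < 2*J+1"
    consider "Suc i \<le> J" | "i = J" | "J < i" by linarith
    then show ?thesis
    proof cases
      case 1 then show ?thesis using ea[of i] JL unfolding f_def by auto
    next
      case 2
      have "E (pb (Suc (J - 1))) (pb (J - 1))" using eb[of "J-1"] JL J0 by auto
      then show ?thesis using 2 J0 pJ unfolding f_def by (simp add: numeral_2_eq_2)
    next
      case 3
      define k where "k = 2*J - Suc i"
      have k: "2*J - i = Suc k" "k < L" using 3 i JL k_def by auto
      show ?thesis using eb[of k] k 3 unfolding f_def k_def by auto
    qed
  qed
  have inj: "inj_on f {0..<2*J+1}"
  proof (rule inj_onI)
    fix i j assume i: "i \<in> {0..<2*J+1}" and j: "j \<in> {0..<2*J+1}" and fij: "f i = f j"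
    have li: "d m (f i) = (if i \<le> J then L - i else L - (2*J - i))" using lev i by auto
    have lj: "d m (f j) = (if j \<le> J then L - j else L - (2*J - j))" using lev j by auto
    have eq: "(if i \<le> J then L - i else L - (2*J - i)) = (if j \<le> J then L - j else L - (2*J - j))"
      using li lj fij by simp
    show "i = j"
    proof (cases "i \<le> J")
      case True note ti = True
      show ?thesis
      proof (cases "j \<le> J")
        case True then show ?thesis using ti eq JL by auto
      next
        case False
        then have "i = 2*J - j" using ti eq JL i j by auto
        then have "i < J" using False j by auto
        moreover have "pa i = pb i" using fij ti False \<open>i = 2*J - j\<close> unfolding f_def by auto
        ultimately show ?thesis using lt by blast
      qed
    next
      case False note fi = False
      show ?thesis
      proof (cases "j \<le> J")
        case True
        then have "j = 2*J - i" using fi eq JL i j by auto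
        then have "j < J" using fi i by auto
        moreover have "pa j = pb j" using fij True fi \<open>j = 2*J - i\<close> unfolding f_def by auto
        ultimately show ?thesis using lt by blast
      next
        case False then show ?thesis using fi eq JL i j by auto
      qed
    qed
  qed
  have "walk V E P" unfolding walk_def P_def
    using lev edges by (auto simp del: upt_Suc)
  moreover have "distinct P" unfolding P_def using inj by (simp add: distinct_map del: upt_Suc)
  moreover have "hd P = a" unfolding P_def f_def pa_def by (simp add: hd_map del: upt_Suc)
  moreover have "last P = b" unfolding P_def f_def pb_def using J0 by (simp add: last_map del: upt_Suc)
  moreover have "length P \<ge> 3" unfolding P_def using J0 by simp
  moreover have "\<forall>w\<in>set P. d m w \<le> L" unfolding P_def using lev by (auto simp del: upt_Suc)
  ultimately show ?thesis by blast
qed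


lemma no_level_edge: "m \<in> V \<Longrightarrow> E a b \<Longrightarrow> d m a \<noteq> d m b"
proof
  assume m: "m \<in> V" and e: "E a b" and eq: "d m a = d m b"
  obtain P where P: "walk V E P" "distinct P" "hd P = a" "last P = b" "length P \<ge> 3"
    using cyc_path[OF m _ _ Eirr[OF e] refl eq[symmetric]] EV[OF e] by blast
  then have "is_cycle V E P" unfolding is_cycle_def using Esym[OF e] by simp
  then show False using nocyc by blast
qed

lemma two_parents:
  assumes m: "m \<in> V" and ex: "E x s" and ey: "E y s" and xy: "x \<noteq> y"
    and dx: "d m x + 1 = d m s" and dy: "d m y + 1 = d m s"
  shows False
proof -
  obtain P where P: "walk V E P" "distinct P" "hd P = x" "last P = y" "length P \<ge> 3"
     "\<forall>w\<in>set P. d m w \<le> d m x"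
    using cyc_path[OF m _ _ xy refl] EV[OF ex] EV[OF ey] dx dy by force
  have Pne: "P \<noteq> []" using P by auto
  have "s \<notin> set P" using P(6) dx by force
  moreover have "walk V E (s # P)" using walk_Cons[OF Pne] P EV[OF ex] Esym[OF ex] by simp
  ultimately have "is_cycle V E (s # P)" unfolding is_cycle_def using P Pne ey by auto
  then show False using nocyc by blast
qed

lemma leafD: "l \<in> leaves V E \<Longrightarrow> l \<in> V \<and> (\<exists>s. {u\<in>V. E l u} = {s})"
proof -
  assume "l \<in> leaves V E"
  then have "l \<in> V" "card {u\<in>V. E l u} = 1" by (simp_all add: leaves_def degree_def)
  then show ?thesis by (meson card_1_singletonE)
qed

lemma leaf_nb: "l \<in> leaves V E \<Longrightarrow> \<exists>s. E l s"
proof -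
  assume "l \<in> leaves V E"
  then obtain s where "{u\<in>V. E l u} = {s}" using leafD by blast
  then have "s \<in> {u\<in>V. E l u}" by blast
  then show ?thesis by blast
qed

lemma leaf_uniq: "l \<in> leaves V E \<Longrightarrow> E l u \<Longrightarrow> E l v \<Longrightarrow> u = v"
proof -
  assume l: "l \<in> leaves V E" and "E l u" "E l v"
  then have "u \<in> {u\<in>V. E l u}" "v \<in> {u\<in>V. E l u}" using EV by blast+
  moreover obtain s where "{u\<in>V. E l u} = {s}" using leafD[OF l] by blast
  ultimately show "u = v" by (metis singletonD)
qed

lemma leaf_char: "l \<in> V \<Longrightarrow> E l s \<Longrightarrow> (\<forall>u. E l u \<longrightarrow> u = s) \<Longrightarrow> l \<in> leaves V E"
proof -
  assume "l \<in> V" "E l s" "\<forall>u. E l u \<longrightarrow> u = s"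
  then have "{u\<in>V. E l u} = {s}" using EV by blast
  then show ?thesis unfolding leaves_def degree_def using \<open>l \<in> V\<close> by simp
qed

lemma leaf_dist: "l \<in> leaves V E \<Longrightarrow> E l s \<Longrightarrow> u \<in> V \<Longrightarrow> u \<noteq> l \<Longrightarrow> d u l = d u s + 1"
proof -
  assume l: "l \<in> leaves V E" and e: "E l s" and u: "u \<in> V" and ne: "u \<noteq> l"
  have lV: "l \<in> V" using leafD[OF l] by blast
  have "d u l \<noteq> 0" using d_zero[OF u lV] ne by auto
  then obtain k where k: "d u l = Suc k" by (cases "d u l") auto
  then obtain w where "E w l" "d u w = k" using d_pred[OF u lV] by blast
  moreover have "w = s" using leaf_uniq[OF l e] Esym[OF \<open>E w l\<close>] by simp
  ultimately show ?thesis using k by simp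
qed

lemma not_P2:
  assumes np: "\<not> iso_P2 V E" and l: "l \<in> leaves V E" and l': "l' \<in> leaves V E" and e: "E l l'"
  shows False
proof -
  have lV: "l \<in> V" using leafD[OF l] by blast
  have "\<forall>v\<in>V. d l v = k \<longrightarrow> v \<in> {l, l'}" for k
  proof (induction k)
    case 0 then show ?case using d_zero[OF lV] by auto
  next
    case (Suc k)
    show ?case
    proof (intro ballI impI)
      fix v assume v: "v \<in> V" and dv: "d l v = Suc k"
      obtain w where w: "E w v" "d l w = k" using d_pred[OF lV v dv] by blast
      then have "w \<in> {l, l'}" using Suc.IH EV by blast
      then show "v \<in> {l, l'}"
      proof
        assume "w = l" then show ?thesis using leaf_uniq[OF l e] w by auto
      next
        assume "w \<in> {l'}"
        then have "w = l'" by simp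
        then show ?thesis using leaf_uniq[OF l' Esym[OF e]] w by auto
      qed
    qed
  qed
  then have "V \<subseteq> {l, l'}" by blast
  moreover have "{l, l'} \<subseteq> V" using EV[OF e] by auto
  ultimately have "V = {l, l'}" by blast
  then have "iso_P2 V E" unfolding iso_P2_def using e Eirr[OF e] by blast
  then show False using np by blast
qed

lemma far_support:
  assumes xV: "x \<in> V" and xl: "x \<notin> leaves V E" and es: "E s x"
  shows "\<exists>t\<in>support_vertices V E. d x t < d s t"
proof -
  have sV: "s \<in> V" using EV[OF es] by blast
  define C where "C = {w\<in>V. d x w < d s w}"
  have "x \<in> C" unfolding C_def using xV d_refl[OF xV] d_edge[OF es] by simp
  moreover have fC: "finite C" unfolding C_def using finV by simp
  ultimately have ne: "d s ` C \<noteq> {}" "finite (d s ` C)" by auto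
  obtain w where wC: "w \<in> C" and wmax: "\<forall>z\<in>C. d s z \<le> d s w"
    using Max_in[OF ne(2) ne(1)] Max_ge[OF ne(2)] by fastforce
  have wV: "w \<in> V" and dxw: "d x w < d s w" using wC unfolding C_def by auto
  define D where "D = d s w"
  have nbs: "d s z + 1 = D" if ez: "E w z" for z
  proof -
    have zV: "z \<in> V" using EV[OF ez] by blast
    have a1: "d s z \<le> D + 1" using d_tri[OF sV ez] D_def by simp
    have a2: "D \<le> d s z + 1" using d_tri[OF sV Esym[OF ez]] D_def by simp
    have a3: "d s z \<noteq> D" using no_level_edge[OF sV ez] D_def by simp
    have a4: "d s z \<noteq> D + 1"
    proof
      assume h: "d s z = D + 1"
      have "d x z \<le> d x w + 1" using d_tri[OF xV ez] .
      then have "z \<in> C" unfolding C_def using zV h dxw D_def by simp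
      then show False using wmax h D_def by fastforce
    qed
    show ?thesis using a1 a2 a3 a4 by linarith
  qed
  have "w \<noteq> s" using dxw d_refl[OF sV] by auto
  then have "d s w \<noteq> 0" using d_zero[OF sV wV] by auto
  then obtain k where k: "d s w = Suc k" by (cases "d s w") auto
  obtain z0 where z0: "E z0 w" using d_pred[OF sV wV k] by blast
  have uniq: "\<forall>u. E w u \<longrightarrow> u = z0"
  proof (intro allI impI)
    fix u assume eu: "E w u"
    show "u = z0"
    proof (rule ccontr)
      assume "u \<noteq> z0"
      then show False using two_parents[OF sV Esym[OF eu] z0] nbs[OF eu] nbs[OF Esym[OF z0]] D_def by auto
    qed
  qed
  have wl: "w \<in> leaves V E" using leaf_char[OF wV Esym[OF z0] uniq] .
  have "w \<noteq> x" using wl xl by auto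
  then have "d x w \<noteq> 0" using d_zero[OF xV wV] by auto
  then obtain k' where k': "d x w = Suc k'" by (cases "d x w") auto
  obtain t where t: "E t w" "d x t = k'" using d_pred[OF xV wV k'] by blast
  have "d s t + 1 = D" using nbs[OF Esym[OF t(1)]] .
  moreover have "t \<in> support_vertices V E" unfolding support_vertices_def using EV[OF t(1)] wl t(1) by blast
  ultimately show ?thesis using t k' dxw D_def by (intro bexI[of _ t]) auto
qed


lemma Min_card:
  assumes "\<forall>D\<in>F. D \<subseteq> V" "F \<noteq> {}"
  shows "Min (card ` F) \<in> card ` F \<and> (\<forall>D\<in>F. Min (card ` F) \<le> card D)"
proof -
  have "F \<subseteq> Pow V" using assms(1) by blast
  moreover have "finite (Pow V)" using finV by simp
  ultimately have "finite F" by (rule finite_subset)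
  then have fc: "finite (card ` F)" by simp
  have ne: "card ` F \<noteq> {}" using assms(2) by simp
  show ?thesis using Min_in[OF fc ne] Min_le[OF fc] by simp
qed

definition sp where "sp l = (SOME s. E l s)"
definition cl where "cl s = (SOME l. l \<in> leaves V E \<and> E s l)"

lemma sp: "l \<in> leaves V E \<Longrightarrow> E l (sp l) \<and> sp l \<in> support_vertices V E"
proof -
  assume l: "l \<in> leaves V E"
  have e: "E l (sp l)" unfolding sp_def using leaf_nb[OF l] by (rule someI_ex)
  have "sp l \<in> V" using EV[OF e] by simp
  then show ?thesis unfolding support_vertices_def using e Esym[OF e] l by blast
qed

lemma cl: "s \<in> support_vertices V E \<Longrightarrow> cl s \<in> leaves V E \<and> E s (cl s)"
  unfolding cl_def support_vertices_def by (rule someI_ex) blast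

lemma sp_cl: "s \<in> support_vertices V E \<Longrightarrow> sp (cl s) = s"
  using cl[of s] sp[of "cl s"] leaf_uniq[of "cl s"] Esym by blast

lemma supV: "support_vertices V E \<subseteq> V" unfolding support_vertices_def by blast
lemma leafV: "leaves V E \<subseteq> V" unfolding leaves_def by blast

context
  assumes np: "\<not> iso_P2 V E"
begin

lemma sup_not_leaf: "s \<in> support_vertices V E \<Longrightarrow> s \<notin> leaves V E"
  using not_P2[OF np] unfolding support_vertices_def by blast

lemma dom_lower: "dominating_set V E D \<Longrightarrow> card (support_vertices V E) \<le> card D"
proof -
  assume D: "dominating_set V E D"
  let ?S = "support_vertices V E"
  define g where "g s = (if s \<in> D then s else cl s)" for s
  have img: "g ` ?S \<subseteq> D"
  proof
    fix x assume "x \<in> g ` ?S"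
    then obtain s where s: "s \<in> ?S" "x = g s" by blast
    show "x \<in> D"
    proof (cases "s \<in> D")
      case True then show ?thesis using s g_def by simp
    next
      case False
      have c: "cl s \<in> leaves V E" "E s (cl s)" using cl[OF s(1)] by auto
      have "cl s \<in> D"
      proof (rule ccontr)
        assume "cl s \<notin> D"
        moreover have "cl s \<in> V" using c(1) leafV by (rule subsetD[rotated])
        ultimately have "cl s \<in> V - D" by simp
        then obtain u where "u \<in> D" "E (cl s) u" using D unfolding dominating_set_def by blast
        then have "u = s" using leaf_uniq[OF c(1)] Esym[OF c(2)] by blast
        then show False using False \<open>u \<in> D\<close> by simp
      qed
      then show ?thesis using s False g_def by simp
    qed
  qed
  have inj: "inj_on g ?S"
  proof (rule inj_onI)
    fix s s' assume s: "s \<in> ?S" and s': "s' \<in> ?S" and eq: "g s = g s'"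
    show "s = s'"
    proof (cases "s \<in> D"; cases "s' \<in> D")
      assume "s \<in> D" "s' \<in> D" then show ?thesis using eq g_def by simp
    next
      assume "s \<in> D" "s' \<notin> D"
      then have "s = cl s'" using eq g_def by simp
      moreover have "cl s' \<in> leaves V E" using cl[OF s'] by blast
      ultimately show ?thesis using sup_not_leaf[OF s] by blast
    next
      assume "s \<notin> D" "s' \<in> D"
      then have "s' = cl s" using eq g_def by simp
      moreover have "cl s \<in> leaves V E" using cl[OF s] by blast
      ultimately show ?thesis using sup_not_leaf[OF s'] by blast
    next
      assume "s \<notin> D" "s' \<notin> D"
      then have "cl s = cl s'" using eq g_def by simp
      then have "sp (cl s) = sp (cl s')" by simp
      then show ?thesis using sp_cl[OF s] sp_cl[OF s'] by simp
    qed
  qed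
  have "finite D" using D finV finite_subset unfolding dominating_set_def by blast
  then show ?thesis using card_inj_on_le[OF inj img] by simp
qed

lemma dom_eq_struct: "dominating_set V E D \<Longrightarrow> card D = card (support_vertices V E) \<Longrightarrow>
   D \<subseteq> support_vertices V E \<union> leaves V E"
proof -
  assume D: "dominating_set V E D" and cd: "card D = card (support_vertices V E)"
  let ?S = "support_vertices V E"
  define g where "g s = (if s \<in> D then s else cl s)" for s
  have img: "g ` ?S \<subseteq> D"
  proof
    fix x assume "x \<in> g ` ?S"
    then obtain s where s: "s \<in> ?S" "x = g s" by blast
    show "x \<in> D"
    proof (cases "s \<in> D")
      case True then show ?thesis using s g_def by simp
    next
      case False
      have c: "cl s \<in> leaves V E" "E s (cl s)" using cl[OF s(1)] by auto
      have "cl s \<in> D"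
      proof (rule ccontr)
        assume "cl s \<notin> D"
        moreover have "cl s \<in> V" using c(1) leafV by (rule subsetD[rotated])
        ultimately have "cl s \<in> V - D" by simp
        then obtain u where "u \<in> D" "E (cl s) u" using D unfolding dominating_set_def by blast
        then have "u = s" using leaf_uniq[OF c(1)] Esym[OF c(2)] by blast
        then show False using False \<open>u \<in> D\<close> by simp
      qed
      then show ?thesis using s False g_def by simp
    qed
  qed
  have inj: "inj_on g ?S"
  proof (rule inj_onI)
    fix s s' assume s: "s \<in> ?S" and s': "s' \<in> ?S" and eq: "g s = g s'"
    show "s = s'"
    proof (cases "s \<in> D"; cases "s' \<in> D")
      assume "s \<in> D" "s' \<in> D" then show ?thesis using eq g_def by simp
    next
      assume "s \<in> D" "s' \<notin> D"
      then have "s = cl s'" using eq g_def by simp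
      moreover have "cl s' \<in> leaves V E" using cl[OF s'] by blast
      ultimately show ?thesis using sup_not_leaf[OF s] by blast
    next
      assume "s \<notin> D" "s' \<in> D"
      then have "s' = cl s" using eq g_def by simp
      moreover have "cl s \<in> leaves V E" using cl[OF s] by blast
      ultimately show ?thesis using sup_not_leaf[OF s'] by blast
    next
      assume "s \<notin> D" "s' \<notin> D"
      then have "cl s = cl s'" using eq g_def by simp
      then have "sp (cl s) = sp (cl s')" by simp
      then show ?thesis using sp_cl[OF s] sp_cl[OF s'] by simp
    qed
  qed
  have fD: "finite D" using D finV finite_subset unfolding dominating_set_def by blast
  have "card (g ` ?S) = card D" using card_image[OF inj] cd by simp
  then have "g ` ?S = D" using card_subset_eq[OF fD img] by simp
  moreover have "g ` ?S \<subseteq> ?S \<union> leaves V E"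
  proof
    fix x assume "x \<in> g ` ?S"
    then obtain s where s: "s \<in> ?S" "x = g s" by blast
    then show "x \<in> ?S \<union> leaves V E" using cl[OF s(1)] unfolding g_def by (cases "s \<in> D") simp_all
  qed
  ultimately show ?thesis by simp
qed

lemma mld_struct: "mld_set V E W \<Longrightarrow> card (leaves V E) \<le> card W \<and>
   (card W = card (leaves V E) \<longrightarrow> W \<subseteq> support_vertices V E \<union> leaves V E)"
proof -
  assume W: "mld_set V E W"
  let ?L = "leaves V E"
  have dW: "dominating_set V E W" and rW: "resolving_set V E W" using W unfolding mld_set_def by auto
  define h where "h l = (if l \<in> W then l else sp l)" for l
  have img: "h ` ?L \<subseteq> W"
  proof
    fix x assume "x \<in> h ` ?L"
    then obtain l where l: "l \<in> ?L" "x = h l" by blast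
    show "x \<in> W"
    proof (cases "l \<in> W")
      case True then show ?thesis using l h_def by simp
    next
      case False
      moreover have "l \<in> V" using l(1) leafV by (rule subsetD[rotated])
      ultimately have "l \<in> V - W" by simp
      then obtain u where "u \<in> W" "E l u" using dW unfolding dominating_set_def by blast
      then have "u = sp l" using leaf_uniq[OF l(1)] sp[OF l(1)] by blast
      then show ?thesis using l False h_def \<open>u \<in> W\<close> by simp
    qed
  qed
  have inj: "inj_on h ?L"
  proof (rule inj_onI)
    fix l l' assume l: "l \<in> ?L" and l': "l' \<in> ?L" and eq: "h l = h l'"
    show "l = l'"
    proof (cases "l \<in> W"; cases "l' \<in> W")
      assume "l \<in> W" "l' \<in> W" then show ?thesis using eq h_def by simp
    next
      assume "l \<in> W" "l' \<notin> W"
      then have "l = sp l'" using eq h_def by simp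
      then show ?thesis using sp[OF l'] sup_not_leaf[of l] l by blast
    next
      assume "l \<notin> W" "l' \<in> W"
      then have "l' = sp l" using eq h_def by simp
      then show ?thesis using sp[OF l] sup_not_leaf[of l'] l' by blast
    next
      assume nW: "l \<notin> W" "l' \<notin> W"
      then have sps: "sp l = sp l'" using eq h_def by simp
      show ?thesis
      proof (rule ccontr)
        assume ne: "l \<noteq> l'"
        have lV: "l \<in> V" "l' \<in> V" using l l' leafV by (auto dest: subsetD)
        then obtain u where u: "u \<in> W" "d u l \<noteq> d u l'" using rW ne unfolding resolving_set_def by blast
        have uV: "u \<in> V" using u rW unfolding resolving_set_def by blast
        have "d u l = d u (sp l) + 1" using leaf_dist[OF l _ uV] sp[OF l] u nW by auto
        moreover have "d u l' = d u (sp l') + 1" using leaf_dist[OF l' _ uV] sp[OF l'] u nW by auto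
        ultimately show False using sps u by simp
      qed
    qed
  qed
  have fW: "finite W" using dW finV finite_subset unfolding dominating_set_def by blast
  have c1: "card ?L \<le> card W" using card_inj_on_le[OF inj img fW] .
  moreover have "card W = card ?L \<longrightarrow> W \<subseteq> support_vertices V E \<union> ?L"
  proof
    assume cw: "card W = card ?L"
    have "card (h ` ?L) = card W" using card_image[OF inj] cw by simp
    then have "h ` ?L = W" using card_subset_eq[OF fW img] by simp
    moreover have "h ` ?L \<subseteq> support_vertices V E \<union> ?L"
    proof
      fix x assume "x \<in> h ` ?L"
      then obtain l where l: "l \<in> ?L" "x = h l" by blast
      then show "x \<in> support_vertices V E \<union> ?L" using sp[OF l(1)] unfolding h_def by (cases "l \<in> W") simp_all
    qed
    ultimately show "W \<subseteq> support_vertices V E \<union> ?L" by simp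
  qed
  ultimately show ?thesis by blast
qed

lemma far_vertex:
  assumes u: "u \<in> V" and far: "\<forall>l\<in>leaves V E. \<not> d u l \<le> 2"
  shows "u \<notin> support_vertices V E \<union> leaves V E \<and>
     (\<forall>w. E u w \<longrightarrow> w \<notin> support_vertices V E \<union> leaves V E)"
proof -
  have a: "u \<notin> leaves V E" using far d_refl[OF u] by force
  have b: "u \<notin> support_vertices V E"
  proof
    assume "u \<in> support_vertices V E"
    then obtain l where "l \<in> leaves V E" "E u l" unfolding support_vertices_def by blast
    then show False using far d_edge by force
  qed
  have c: "w \<notin> support_vertices V E \<union> leaves V E" if e: "E u w" for w
  proof
    assume "w \<in> support_vertices V E \<union> leaves V E"
    then show False
    proof
      assume "w \<in> support_vertices V E"
      then obtain l where l: "l \<in> leaves V E" "E w l" unfolding support_vertices_def by blast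
      have "d u l \<le> d u w + 1" using d_tri[OF u l(2)] .
      then show False using far l d_edge[OF e] by force
    next
      assume "w \<in> leaves V E"
      then show False using far d_edge[OF e] by force
    qed
  qed
  show ?thesis using a b c by blast
qed


context
  assumes iii: "\<forall>u\<in>V. \<exists>l\<in>leaves V E. d u l \<le> 2"
begin

lemma adj_sup: "x \<in> V \<Longrightarrow> x \<notin> support_vertices V E \<Longrightarrow> \<exists>a\<in>support_vertices V E. E x a"
proof -
  assume xV: "x \<in> V" and xS: "x \<notin> support_vertices V E"
  show ?thesis
  proof (cases "x \<in> leaves V E")
    case True then show ?thesis using sp[OF True] by blast
  next
    case False
    obtain l where l: "l \<in> leaves V E" "d x l \<le> 2" using iii xV by blast
    have lV: "l \<in> V" using l(1) leafV by (rule subsetD[rotated])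
    have "x \<noteq> l" using l False by blast
    then have n0: "d x l \<noteq> 0" using d_zero[OF xV lV] by blast
    have n1: "d x l \<noteq> 1"
    proof
      assume "d x l = 1"
      then have "E x l" using d_one[OF xV lV] by simp
      then have "x \<in> support_vertices V E" unfolding support_vertices_def using xV l(1) by blast
      then show False using xS by simp
    qed
    have "d x l = Suc 1" using n0 n1 l(2) by linarith
    then obtain w where w: "E w l" "d x w = 1" using d_pred[OF xV lV] by blast
    have wV: "w \<in> V" using EV[OF w(1)] by simp
    have "E x w" using d_one[OF xV wV w(2)] .
    moreover have "w \<in> support_vertices V E" unfolding support_vertices_def using wV w(1) l(1) by blast
    ultimately show ?thesis by blast
  qed
qed

lemma S_dom: "dominating_set V E (support_vertices V E)"
  unfolding dominating_set_def using supV adj_sup by blast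

definition h0 where "h0 l = (if l = cl (sp l) then sp l else l)"
definition MM where "MM = h0 ` leaves V E"

lemma MV: "MM \<subseteq> V"
proof
  fix x assume "x \<in> MM"
  then obtain l where l: "l \<in> leaves V E" "x = h0 l" unfolding MM_def by blast
  show "x \<in> V" using l sp[OF l(1)] leafV supV unfolding h0_def by (cases "l = cl (sp l)") auto
qed

lemma SM: "support_vertices V E \<subseteq> MM"
proof
  fix s assume s: "s \<in> support_vertices V E"
  have "cl s \<in> leaves V E" using cl[OF s] by blast
  moreover have "h0 (cl s) = s" unfolding h0_def using sp_cl[OF s] by simp
  ultimately show "s \<in> MM" unfolding MM_def by force
qed

lemma notM: "x \<in> V \<Longrightarrow> x \<notin> MM \<Longrightarrow>
   x \<notin> support_vertices V E \<and> (\<exists>a\<in>support_vertices V E. E x a) \<and> (x \<in> leaves V E \<longrightarrow> x = cl (sp x))"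
proof -
  assume xV: "x \<in> V" and xM: "x \<notin> MM"
  have xS: "x \<notin> support_vertices V E" using xM SM by blast
  have "x \<in> leaves V E \<longrightarrow> x = cl (sp x)"
  proof
    assume xl: "x \<in> leaves V E"
    show "x = cl (sp x)"
    proof (rule ccontr)
      assume "x \<noteq> cl (sp x)"
      then have "h0 x = x" unfolding h0_def by simp
      then have "x \<in> MM" unfolding MM_def using xl by force
      then show False using xM by simp
    qed
  qed
  then show ?thesis using xS adj_sup[OF xV xS] by blast
qed

lemma sep:
  assumes xV: "x \<in> V" and xl: "x \<notin> leaves V E" and ex: "E a x" and ey: "E a y" and xy: "x \<noteq> y"
  shows "\<exists>t\<in>support_vertices V E. d t x \<noteq> d t y"
proof -
  obtain t where t: "t \<in> support_vertices V E" "d x t < d a t" using far_support[OF xV xl ex] by blast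
  have tV: "t \<in> V" using t(1) supV by blast
  have aV: "a \<in> V" using EV[OF ex] by simp
  have yV: "y \<in> V" using EV[OF ey] by simp
  have s1: "d t x < d t a" using t(2) d_sym[OF tV xV] d_sym[OF tV aV] by simp
  have s2: "d t a \<le> d t x + 1" using d_tri[OF tV Esym[OF ex]] .
  have eq: "d t x + 1 = d t a" using s1 s2 by simp
  have "d t x \<noteq> d t y"
  proof
    assume "d t x = d t y"
    then have "d t y + 1 = d t a" using eq by simp
    then show False using two_parents[OF tV Esym[OF ex] Esym[OF ey] xy eq] by simp
  qed
  then show ?thesis using t(1) by blast
qed

lemma M_mld: "mld_set V E MM"
proof -
  have dom: "dominating_set V E MM"
    unfolding dominating_set_def using MV notM SM by blast
  have res: "\<exists>u\<in>MM. d u x \<noteq> d u y" if xV: "x \<in> V" and yV: "y \<in> V" and xy: "x \<noteq> y" for x y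
  proof (cases "x \<in> MM")
    case True
    have "d x x \<noteq> d x y" using d_refl[OF xV] d_zero[OF xV yV] xy by auto
    then show ?thesis using True by blast
  next
    case xM: False
    show ?thesis
    proof (cases "y \<in> MM")
      case True
      have "d y x \<noteq> d y y" using d_refl[OF yV] d_zero[OF yV xV] xy by auto
      then show ?thesis using True by blast
    next
      case yM: False
      obtain a where a: "a \<in> support_vertices V E" "E x a" using notM[OF xV xM] by blast
      have aM: "a \<in> MM" using a(1) SM by blast
      have aV: "a \<in> V" using EV[OF a(2)] by simp
      show ?thesis
      proof (cases "d a y = 1")
        case False
        have "d a x = 1" using d_edge[OF Esym[OF a(2)]] .
        then show ?thesis using False aM by force
      next
        case True
        have ay: "E a y" using d_one[OF aV yV True] .
        show ?thesis
        proof (cases "x \<in> leaves V E")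
          case xl: False
          obtain t where "t \<in> support_vertices V E" "d t x \<noteq> d t y" using sep[OF xV xl Esym[OF a(2)] ay xy] by blast
          then show ?thesis using SM by blast
        next
          case xl: True
          show ?thesis
          proof (cases "y \<in> leaves V E")
            case yl: False
            obtain t where "t \<in> support_vertices V E" "d t y \<noteq> d t x" using sep[OF yV yl ay Esym[OF a(2)]] xy by blast
            then show ?thesis using SM by force
          next
            case yl: True
            have "x = cl (sp x)" "y = cl (sp y)" using notM[OF xV xM] notM[OF yV yM] xl yl by auto
            moreover have "sp x = a" using leaf_uniq[OF xl] sp[OF xl] a(2) by blast
            moreover have "sp y = a" using leaf_uniq[OF yl] sp[OF yl] Esym[OF ay] by blast
            ultimately show ?thesis using xy by simp
          qed
        qed
      qed
    qed
  qed
  have "resolving_set V E MM" unfolding resolving_set_def using MV res by blast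
  then show ?thesis using dom unfolding mld_set_def by simp
qed

lemma card_MM: "card MM \<le> card (leaves V E)"
  unfolding MM_def by (rule card_image_le) (rule finite_subset[OF leafV finV])

end

lemma marker2: True by simp

end

end

theorem theorem4:
  fixes V :: "'a set" and E :: "'a \<Rightarrow> 'a \<Rightarrow> bool"
  assumes "is_tree V E" and "\<not> iso_P2 V E"
  shows "(mld_number V E = card (leaves V E) \<longleftrightarrow> domination_number V E = card (support_vertices V E))
       \<and> (domination_number V E = card (support_vertices V E) \<longleftrightarrow>
            (\<forall>u\<in>V. \<exists>l\<in>leaves V E. gdist V E u l \<le> 2))"
proof -
  interpret tr V E by unfold_locales (rule assms(1))
  note np = assms(2)
  let ?S = "support_vertices V E" and ?L = "leaves V E"
  let ?P = "\<forall>u\<in>V. \<exists>l\<in>leaves V E. gdist V E u l \<le> 2"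
  have Vdom: "dominating_set V E V" unfolding dominating_set_def by simp
  have Vres: "resolving_set V E V" unfolding resolving_set_def
  proof (intro conjI ballI impI)
    fix x y assume xV: "x \<in> V" and yV: "y \<in> V" and xy: "x \<noteq> y"
    have "d x x \<noteq> d x y" using d_refl[OF xV] d_zero[OF xV yV] xy by auto
    then show "\<exists>u\<in>V. d u x \<noteq> d u y" using xV by blast
  qed simp
  have F1: "\<forall>D\<in>{D. dominating_set V E D}. D \<subseteq> V" unfolding dominating_set_def by blast
  have F2: "\<forall>D\<in>{D. mld_set V E D}. D \<subseteq> V" unfolding mld_set_def dominating_set_def by blast
  have N1: "{D. dominating_set V E D} \<noteq> {}" using Vdom by blast
  have N2: "{D. mld_set V E D} \<noteq> {}" using Vdom Vres unfolding mld_set_def by blast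
  obtain D0 where D0: "dominating_set V E D0" "card D0 = domination_number V E"
    and Dmin: "\<forall>D. dominating_set V E D \<longrightarrow> domination_number V E \<le> card D"
    using Min_card[OF F1 N1] unfolding domination_number_def by fastforce
  obtain W0 where W0: "mld_set V E W0" "card W0 = mld_number V E"
    and Wmin: "\<forall>D. mld_set V E D \<longrightarrow> mld_number V E \<le> card D"
    using Min_card[OF F2 N2] unfolding mld_number_def by fastforce
  have g1: "card ?S \<le> domination_number V E" using dom_lower[OF np D0(1)] D0(2) by simp
  have g2: "card ?L \<le> mld_number V E" using mld_struct[OF np W0(1)] W0(2) by simp
  show ?thesis
  proof (cases ?P)
    case True
    have "domination_number V E \<le> card ?S" using Dmin S_dom[OF np True] by blast
    then have e1: "domination_number V E = card ?S" using g1 by simp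
    have "mld_number V E \<le> card ?L" using Wmin M_mld[OF np True] card_MM[OF np True] by fastforce
    then have e2: "mld_number V E = card ?L" using g2 by simp
    show ?thesis using e1 e2 True by simp
  next
    case False
    then obtain u where u: "u \<in> V" "\<forall>l\<in>?L. \<not> d u l \<le> 2" by blast
    note fv = far_vertex[OF np u]
    have e1: "domination_number V E \<noteq> card ?S"
    proof
      assume h: "domination_number V E = card ?S"
      have sub: "D0 \<subseteq> ?S \<union> ?L" using dom_eq_struct[OF np D0(1)] D0(2) h by simp
      then have "u \<notin> D0" using fv by blast
      then obtain w where "w \<in> D0" "E u w" using D0(1) u(1) unfolding dominating_set_def by blast
      then show False using fv sub by blast
    qed
    have e2: "mld_number V E \<noteq> card ?L"
    proof
      assume h: "mld_number V E = card ?L"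
      have sub: "W0 \<subseteq> ?S \<union> ?L" using mld_struct[OF np W0(1)] W0(2) h by simp
      then have "u \<notin> W0" using fv by blast
      then obtain w where "w \<in> W0" "E u w" using W0(1) u(1) unfolding mld_set_def dominating_set_def by blast
      then show False using fv sub by blast
    qed
    show ?thesis using e1 e2 False by simp
  qed
qed

end
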